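(* Let $\mathcal{G}=(\mathcal{V},\mathcal{E},\mathcal{W})$ be a directed graph with nonnegative edge weights $w_{(x,y)}$ (with $w_{(x,y)}=0$ when $(x,y)\notin\mathcal{E}$). Let $d(x)=\sum_{y\in\operatorname{Nei}(x)} w_{(x,y)}$ be the generalized out-degree and $N^{in}(y)=\{x : w_{(x,y)}>0\}$ the in-neighbors. Fix $\alpha\in(0,1)$, $\epsilon>0$ and a source node $s\in\mathcal{V}$. Suppose vectors $p_s,r_s\in\mathbb{R}^{\mathcal{V}}$ satisfy the invariant $$p_s(i)+\alpha r_s(i)=(1-\alpha)\sum_{x\in N^{in}(i)}\frac{w_{(x,i)}\,p_s(x)}{d(x)}+\alpha\,1_{i=s}\qquad\text{for all } i\in\mathcal{V}.\qquad (\ast)$$ Consider an edge event $(u,v,\Delta w_{(u,v)})$ with $\Delta w_{(u,v)}\in\mathbb{R}$, transforming $\mathcal{G}$ into $\mathcal{G}'$ with weights $w'_{(u,v)}=w_{(u,v)}+\Delta w_{(u,v)}\ge 0$ and all other weights unchanged, so that $d'(u)=d(u)+\Delta w_{(u,v)}$; assume $d(u)>0$ and $d'(u)>0$. Define $p_s',r_s'$ to agree with $p_s,r_s$ except $$p'_s(u)=p_s(u)\,\frac{d(u)+\Delta w_{(u,v)}}{d(u)},\qquad r'_s(u)=r_s(u)-\frac{\Delta w_{(u,v)}\,p_s(u)}{\alpha\, d(u)},\qquad r'_s(v)=r_s(v)+\frac{1-\alpha}{\alpha}\,\frac{\Delta w_{(u,v)}\,p_s(u)}{d(u)}$$ (all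 right-hand sides computed from the values before the event; if $u=v$ both residual updates are applied to $r_s(u)$). Then $p'_s,r'_s$ satisfy the invariant $(\ast)$ with respect to $\mathcal{G}'$ (i.e., with $w',d'$ in place of $w,d$). Consequently, applying these rules successively to each event of a sequence of edge events (each time with respect to the current graph) and then running the weighted forward push procedure on the final graph yields vectors $p_s,r_s$ that satisfy $(\ast)$ with respect to the final graph and, upon termination, satisfy $|r_s(i)|\le\epsilon\, d(i)$ for all $i$, so that $p_s$ approximates the Personalized PageRank vector of $s$.
   Context: Weighted forward push procedure (input $p_s,r_s$, graph, $\epsilon,\alpha$): while there exists a node $x$ with $|r_s(x)|>\epsilon d(x)$, perform $\textsc{Push}(x)$: set $p_s(x)\mathrel{+}=\alpha r_s(x)$; for each out-neighbor $y$ of $x$, set $r_s(y)\mathrel{+}=(1-\alpha)r_s(x)w_{(x,y)}/d(x)$; then set $r_s(x)=0$. The Personalized PageRank vector of $s$ is $\pi_s=(1-\alpha)(D^{-1}A)^\top\pi_s+\alpha 1_s$, where $A(x,y)=w_{(x,y)}$ and $D=\operatorname{diag}(d)$; $1_s$ is the indicator vector of $s$ and $1_{i=s}$ is $1$ if $i=s$ and $0$ otherwise. *)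

theory Defs
  imports "HOL-Analysis.Analysis"
begin

text \<open>Weighted directed graph on a finite vertex set V, weights w x y (w x y = 0 means no edge).\<close>

definition wgraph :: "'a set \<Rightarrow> ('a \<Rightarrow> 'a \<Rightarrow> real) \<Rightarrow> bool" where
  "wgraph V w \<longleftrightarrow> finite V \<and> (\<forall>x y. 0 \<le> w x y) \<and> (\<forall>x y. (x \<notin> V \<or> y \<notin> V) \<longrightarrow> w x y = 0)"

definition deg :: "'a set \<Rightarrow> ('a \<Rightarrow> 'a \<Rightarrow> real) \<Rightarrow> 'a \<Rightarrow> real" where
  "deg V w x = (\<Sum>y\<in>V. w x y)"

definition in_nei :: "'a set \<Rightarrow> ('a \<Rightarrow> 'a \<Rightarrow> real) \<Rightarrow> 'a \<Rightarrow> 'a set" where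
  "in_nei V w i = {x \<in> V. 0 < w x i}"

definition ppr_invariant ::
  "'a set \<Rightarrow> ('a \<Rightarrow> 'a \<Rightarrow> real) \<Rightarrow> real \<Rightarrow> 'a \<Rightarrow> ('a \<Rightarrow> real) \<Rightarrow> ('a \<Rightarrow> real) \<Rightarrow> bool" where
  "ppr_invariant V w \<alpha> s p r \<longleftrightarrow>
     (\<forall>i\<in>V. p i + \<alpha> * r i =
        (1 - \<alpha>) * (\<Sum>x\<in>in_nei V w i. w x i * p x / deg V w x) + \<alpha> * (if i = s then 1 else 0))"

definition event_w :: "('a \<Rightarrow> 'a \<Rightarrow> real) \<Rightarrow> 'a \<Rightarrow> 'a \<Rightarrow> real \<Rightarrow> ('a \<Rightarrow> 'a \<Rightarrow> real)" where
  "event_w w u v dw = w(u := (w u)(v := w u v + dw))"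

definition event_p :: "'a set \<Rightarrow> ('a \<Rightarrow> 'a \<Rightarrow> real) \<Rightarrow> ('a \<Rightarrow> real) \<Rightarrow> 'a \<Rightarrow> real \<Rightarrow> ('a \<Rightarrow> real)" where
  "event_p V w p u dw = p(u := p u * (deg V w u + dw) / deg V w u)"

definition event_r ::
  "'a set \<Rightarrow> ('a \<Rightarrow> 'a \<Rightarrow> real) \<Rightarrow> real \<Rightarrow> ('a \<Rightarrow> real) \<Rightarrow> ('a \<Rightarrow> real) \<Rightarrow> 'a \<Rightarrow> 'a \<Rightarrow> real \<Rightarrow> ('a \<Rightarrow> real)" where
  "event_r V w \<alpha> p r u v dw = (\<lambda>i. r i
      - (if i = u then dw * p u / (\<alpha> * deg V w u) else 0)
      + (if i = v then (1 - \<alpha>) / \<alpha> * (dw * p u / deg V w u) else 0))"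

definition event_ok :: "'a set \<Rightarrow> ('a \<Rightarrow> 'a \<Rightarrow> real) \<Rightarrow> 'a \<Rightarrow> 'a \<Rightarrow> real \<Rightarrow> bool" where
  "event_ok V w u v dw \<longleftrightarrow> u \<in> V \<and> v \<in> V \<and> 0 \<le> w u v + dw \<and> 0 < deg V w u \<and> 0 < deg V w u + dw"

type_synonym 'a state = "('a \<Rightarrow> 'a \<Rightarrow> real) \<times> ('a \<Rightarrow> real) \<times> ('a \<Rightarrow> real)"

definition apply_event :: "'a set \<Rightarrow> real \<Rightarrow> 'a state \<Rightarrow> ('a \<times> 'a \<times> real) \<Rightarrow> 'a state" where
  "apply_event V \<alpha> st e = (case st of (w, p, r) \<Rightarrow> case e of (u, v, dw) \<Rightarrow>
      (event_w w u v dw, event_p V w p u dw, event_r V w \<alpha> p r u v dw))"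

fun events_ok :: "'a set \<Rightarrow> real \<Rightarrow> 'a state \<Rightarrow> ('a \<times> 'a \<times> real) list \<Rightarrow> bool" where
  "events_ok V \<alpha> st [] = True"
| "events_ok V \<alpha> st (e # es) =
     ((case st of (w, p, r) \<Rightarrow> case e of (u, v, dw) \<Rightarrow> event_ok V w u v dw)
      \<and> events_ok V \<alpha> (apply_event V \<alpha> st e) es)"

definition run_events :: "'a set \<Rightarrow> real \<Rightarrow> 'a state \<Rightarrow> ('a \<times> 'a \<times> real) list \<Rightarrow> 'a state" where
  "run_events V \<alpha> st es = foldl (apply_event V \<alpha>) st es"

text \<open>Push(x): p(x) += alpha r(x); r(x) := 0; r(y) += (1-alpha) r(x) w(x,y)/d(x) for every
  out-neighbour y (all with the old value r(x); a self-loop contribution is kept).\<close>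
definition push :: "'a set \<Rightarrow> ('a \<Rightarrow> 'a \<Rightarrow> real) \<Rightarrow> real \<Rightarrow> ('a \<Rightarrow> real) \<times> ('a \<Rightarrow> real) \<Rightarrow> 'a
                    \<Rightarrow> ('a \<Rightarrow> real) \<times> ('a \<Rightarrow> real)" where
  "push V w \<alpha> pr x = (case pr of (p, r) \<Rightarrow>
     (p(x := p x + \<alpha> * r x),
      \<lambda>y. (if y = x then 0 else r y) + (1 - \<alpha>) * r x * w x y / deg V w x))"

definition push_step :: "'a set \<Rightarrow> ('a \<Rightarrow> 'a \<Rightarrow> real) \<Rightarrow> real \<Rightarrow> real
      \<Rightarrow> ('a \<Rightarrow> real) \<times> ('a \<Rightarrow> real) \<Rightarrow> ('a \<Rightarrow> real) \<times> ('a \<Rightarrow> real) \<Rightarrow> bool" where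
  "push_step V w \<alpha> \<epsilon> pr pr' \<longleftrightarrow>
     (\<exists>x\<in>V. \<bar>snd pr x\<bar> > \<epsilon> * deg V w x \<and> pr' = push V w \<alpha> pr x)"

definition push_terminated :: "'a set \<Rightarrow> ('a \<Rightarrow> 'a \<Rightarrow> real) \<Rightarrow> real \<Rightarrow> ('a \<Rightarrow> real) \<Rightarrow> bool" where
  "push_terminated V w \<epsilon> r \<longleftrightarrow> \<not> (\<exists>x\<in>V. \<bar>r x\<bar> > \<epsilon> * deg V w x)"

end

theory Submission
  imports Defs
begin

lemma inv_alt:
  assumes "wgraph V w"
  shows "ppr_invariant V w \<alpha> s p r \<longleftrightarrow>
    (\<forall>i\<in>V. p i + \<alpha> * r i = (1 - \<alpha>) * (\<Sum>x\<in>V. w x i * p x / deg V w x) + \<alpha> * (if i = s then 1 else 0))"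
proof -
  have "(\<Sum>x\<in>in_nei V w i. w x i * p x / deg V w x) = (\<Sum>x\<in>V. w x i * p x / deg V w x)" for i
  proof (rule sum.mono_neutral_left)
    show "finite V" using assms by (simp add: wgraph_def)
    show "in_nei V w i \<subseteq> V" by (auto simp: in_nei_def)
    show "\<forall>x\<in>V - in_nei V w i. w x i * p x / deg V w x = 0"
    proof
      fix x assume "x \<in> V - in_nei V w i"
      then have "w x i = 0" using assms by (auto simp: in_nei_def wgraph_def intro: antisym)
      then show "w x i * p x / deg V w x = 0" by simp
    qed
  qed
  then show ?thesis by (simp add: ppr_invariant_def)
qed

lemma event_wgraph:
  assumes "wgraph V w" "event_ok V w u v dw"
  shows "wgraph V (event_w w u v dw)"
  using assms by (auto simp: wgraph_def event_w_def event_ok_def)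

lemma deg_event:
  assumes "wgraph V w" "event_ok V w u v dw"
  shows "deg V (event_w w u v dw) x = (if x = u then deg V w u + dw else deg V w x)"
proof (cases "x = u")
  case True
  have fin: "finite V" using assms by (simp add: wgraph_def)
  have "(\<Sum>y\<in>V. ((w u)(v := w u v + dw)) y) = (\<Sum>y\<in>V. w u y + (if y = v then dw else 0))"
    by (rule sum.cong) auto
  also have "\<dots> = deg V w u + dw"
    using fin assms(2) by (simp add: sum.distrib deg_def event_ok_def)
  finally show ?thesis using True by (simp add: deg_def event_w_def)
next
  case False
  then show ?thesis by (simp add: deg_def event_w_def)
qed

lemma aux_alg:
  fixes S S' c P P' R R' a k :: real
  assumes "S' = S + (if i = v then c else 0)" "P + a * R = (1 - a) * S + a * k"
    "P' = P + (if i = u then c else 0)"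
    "a * R' = a * R - (if i = u then c else 0) + (if i = v then (1 - a) * c else 0)"
  shows "P' + a * R' = (1 - a) * S' + a * k"
  using assms by (simp add: algebra_simps split: if_splits)

lemma event_inv:
  assumes G: "wgraph V w" and ok: "event_ok V w u v dw" and a: "0 < \<alpha>"
    and inv: "ppr_invariant V w \<alpha> s p r"
  shows "ppr_invariant V (event_w w u v dw) \<alpha> s (event_p V w p u dw) (event_r V w \<alpha> p r u v dw)"
proof -
  let ?w = "event_w w u v dw" and ?p = "event_p V w p u dw" and ?r = "event_r V w \<alpha> p r u v dw"
  have fin: "finite V" using G by (simp add: wgraph_def)
  have uV: "u \<in> V" and vV: "v \<in> V" and d: "0 < deg V w u" and d': "0 < deg V w u + dw"
    using ok by (auto simp: event_ok_def)
  have G': "wgraph V ?w" by (rule event_wgraph[OF G ok])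
  have inv0: "\<forall>i\<in>V. p i + \<alpha> * r i = (1 - \<alpha>) * (\<Sum>x\<in>V. w x i * p x / deg V w x) + \<alpha> * (if i = s then 1 else 0)"
    using inv inv_alt[OF G] by blast
  show ?thesis unfolding inv_alt[OF G']
  proof
    fix i assume iV: "i \<in> V"
    have tm: "?w x i * ?p x / deg V ?w x = w x i * p x / deg V w x
        + (if x = u \<and> i = v then dw * p u / deg V w u else 0)" for x
    proof (cases "x = u")
      case True
      have du: "deg V ?w u = deg V w u + dw" using deg_event[OF G ok] by simp
      have "?w u i * ?p u / deg V ?w u = ?w u i * p u / deg V w u"
      proof -
        have "?p u / (deg V w u + dw) = p u / deg V w u"
          using d d' by (simp add: event_p_def)
        then show ?thesis unfolding du by (metis times_divide_eq_right)
      qed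
      also have "\<dots> = w u i * p u / deg V w u + (if i = v then dw * p u / deg V w u else 0)"
        by (simp add: event_w_def add_divide_distrib distrib_right)
      finally show ?thesis using True by simp
    next
      case False
      have "deg V ?w x = deg V w x" using deg_event[OF G ok] False by simp
      then show ?thesis using False by (simp add: event_w_def event_p_def)
    qed
    have "(\<Sum>x\<in>V. ?w x i * ?p x / deg V ?w x) = (\<Sum>x\<in>V. w x i * p x / deg V w x)
        + (if i = v then dw * p u / deg V w u else 0)"
      unfolding tm using fin uV by (simp add: sum.distrib)
    moreover have "p i + \<alpha> * r i = (1 - \<alpha>) * (\<Sum>x\<in>V. w x i * p x / deg V w x) + \<alpha> * (if i = s then 1 else 0)"
      using inv0 iV by blast
    moreover have "?p i = p i + (if i = u then dw * p u / deg V w u else 0)"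
      using d by (simp add: event_p_def field_simps)
    moreover have "\<alpha> * ?r i = \<alpha> * r i - (if i = u then dw * p u / deg V w u else 0)
        + (if i = v then (1 - \<alpha>) * (dw * p u / deg V w u) else 0)"
      using a d by (simp add: event_r_def field_simps)
    ultimately show "?p i + \<alpha> * ?r i = (1 - \<alpha>) * (\<Sum>x\<in>V. ?w x i * ?p x / deg V ?w x) + \<alpha> * (if i = s then 1 else 0)"
      by (rule aux_alg)
  qed
qed

lemma push_inv:
  assumes G: "wgraph V w" and xV: "x \<in> V" and a: "0 < \<alpha>"
    and inv: "ppr_invariant V w \<alpha> s p r" and pu: "push V w \<alpha> (p, r) x = (p', r')"
  shows "ppr_invariant V w \<alpha> s p' r'"
proof -
  have fin: "finite V" using G by (simp add: wgraph_def)
  have inv0: "\<forall>i\<in>V. p i + \<alpha> * r i = (1 - \<alpha>) * (\<Sum>x\<in>V. w x i * p x / deg V w x) + \<alpha> * (if i = s then 1 else 0)"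
    using inv inv_alt[OF G] by blast
  have p': "p' = p(x := p x + \<alpha> * r x)" and
       r': "r' = (\<lambda>y. (if y = x then 0 else r y) + (1 - \<alpha>) * r x * w x y / deg V w x)"
    using pu by (auto simp: push_def)
  show ?thesis unfolding inv_alt[OF G]
  proof
    fix i assume iV: "i \<in> V"
    have tm: "w y i * p' y / deg V w y = w y i * p y / deg V w y
        + (if y = x then w x i * \<alpha> * r x / deg V w x else 0)" for y
      by (cases "y = x") (simp_all add: p' field_simps add_divide_distrib)
    have "(\<Sum>y\<in>V. w y i * p' y / deg V w y) = (\<Sum>y\<in>V. w y i * p y / deg V w y)
        + w x i * \<alpha> * r x / deg V w x"
      unfolding tm using fin xV by (simp add: sum.distrib)
    moreover have "p i + \<alpha> * r i = (1 - \<alpha>) * (\<Sum>x\<in>V. w x i * p x / deg V w x) + \<alpha> * (if i = s then 1 else 0)"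
      using inv0 iV by blast
    ultimately show "p' i + \<alpha> * r' i = (1 - \<alpha>) * (\<Sum>x\<in>V. w x i * p' x / deg V w x) + \<alpha> * (if i = s then 1 else 0)"
      by (auto simp: p' r' algebra_simps)
  qed
qed

lemma events_inv:
  assumes "0 < \<alpha>"
  shows "events_ok V \<alpha> (w, p, r) es \<Longrightarrow> run_events V \<alpha> (w, p, r) es = (w', p', r')
    \<Longrightarrow> wgraph V w \<Longrightarrow> ppr_invariant V w \<alpha> s p r
    \<Longrightarrow> wgraph V w' \<and> ppr_invariant V w' \<alpha> s p' r'"
proof (induction es arbitrary: w p r)
  case Nil
  then show ?case by (simp add: run_events_def)
next
  case (Cons e es)
  obtain u v dw where e: "e = (u, v, dw)" by (cases e) auto
  have ok: "event_ok V w u v dw" and rest: "events_ok V \<alpha> (apply_event V \<alpha> (w, p, r) e) es"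
    using Cons.prems(1) e by auto
  have ap: "apply_event V \<alpha> (w, p, r) e = (event_w w u v dw, event_p V w p u dw, event_r V w \<alpha> p r u v dw)"
    by (simp add: apply_event_def e)
  show ?case
  proof (rule Cons.IH)
    show "events_ok V \<alpha> (event_w w u v dw, event_p V w p u dw, event_r V w \<alpha> p r u v dw) es"
      using rest ap by simp
    show "run_events V \<alpha> (event_w w u v dw, event_p V w p u dw, event_r V w \<alpha> p r u v dw) es = (w', p', r')"
      using Cons.prems(2) ap by (simp add: run_events_def)
    show "wgraph V (event_w w u v dw)" by (rule event_wgraph[OF Cons.prems(3) ok])
    show "ppr_invariant V (event_w w u v dw) \<alpha> s (event_p V w p u dw) (event_r V w \<alpha> p r u v dw)"
      by (rule event_inv[OF Cons.prems(3) ok assms Cons.prems(4)])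
  qed
qed

lemma pushes_inv:
  assumes G: "wgraph V w" and a: "0 < \<alpha>"
  shows "(push_step V w \<alpha> \<epsilon>)\<^sup>*\<^sup>* a0 b0 \<Longrightarrow> ppr_invariant V w \<alpha> s (fst a0) (snd a0)
     \<Longrightarrow> ppr_invariant V w \<alpha> s (fst b0) (snd b0)"
proof (induction rule: rtranclp_induct)
  case base
  then show ?case .
next
  case (step y z)
  then obtain x where xV: "x \<in> V" and z: "z = push V w \<alpha> y x" by (auto simp: push_step_def)
  have "push V w \<alpha> (fst y, snd y) x = (fst z, snd z)" using z by simp
  then show ?case using push_inv[OF G xV a] step by blast
qed

theorem theorem1:
  fixes V :: "'a set" and w :: "'a \<Rightarrow> 'a \<Rightarrow> real" and \<alpha> \<epsilon> :: real and s :: 'a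
    and p r :: "'a \<Rightarrow> real"
  assumes G: "wgraph V w"
    and \<alpha>: "0 < \<alpha>" "\<alpha> < 1" and \<epsilon>: "0 < \<epsilon>" and s: "s \<in> V"
    and inv: "ppr_invariant V w \<alpha> s p r"
  shows
    "(\<forall>u v dw. event_ok V w u v dw \<longrightarrow>
        ppr_invariant V (event_w w u v dw) \<alpha> s (event_p V w p u dw) (event_r V w \<alpha> p r u v dw))
     \<and>
     (\<forall>es w' p' r' pf rf. events_ok V \<alpha> (w, p, r) es
        \<and> run_events V \<alpha> (w, p, r) es = (w', p', r')
        \<and> (push_step V w' \<alpha> \<epsilon>)\<^sup>*\<^sup>* (p', r') (pf, rf) \<longrightarrow>
          wgraph V w' \<and> ppr_invariant V w' \<alpha> s pf rf
          \<and> (push_terminated V w' \<epsilon> rf \<longrightarrow> (\<forall>i\<in>V. \<bar>rf i\<bar> \<le> \<epsilon> * deg V w' i)))"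
proof (intro conjI allI impI)
  fix u v dw assume "event_ok V w u v dw"
  then show "ppr_invariant V (event_w w u v dw) \<alpha> s (event_p V w p u dw) (event_r V w \<alpha> p r u v dw)"
    by (rule event_inv[OF G _ \<alpha>(1) inv])
next
  fix es w' p' r' pf rf
  assume h: "events_ok V \<alpha> (w, p, r) es \<and> run_events V \<alpha> (w, p, r) es = (w', p', r')
        \<and> (push_step V w' \<alpha> \<epsilon>)\<^sup>*\<^sup>* (p', r') (pf, rf)"
  have A: "wgraph V w' \<and> ppr_invariant V w' \<alpha> s p' r'"
    using events_inv[OF \<alpha>(1), of V w p r es w' p' r' s] h G inv by blast
  then show "wgraph V w'" by blast
  show "ppr_invariant V w' \<alpha> s pf rf"
    using pushes_inv[of V w' \<alpha> \<epsilon> "(p', r')" "(pf, rf)" s] A \<alpha>(1) h by simp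
  show "push_terminated V w' \<epsilon> rf \<Longrightarrow> \<forall>i\<in>V. \<bar>rf i\<bar> \<le> \<epsilon> * deg V w' i"
    by (auto simp: push_terminated_def not_less)
qed

end
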